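(* Let $q$ be a prime power and $n\ge k\ge 0$ integers. Let $V_1,\dots,V_\ell$ be subspaces of $\mathbb{F}_q^n$, each of dimension at most $k$. Suppose there exist integers $\delta_1,\dots,\delta_\ell\ge0$ such that $\dim\big(\bigcap_{i\in\Omega}V_i\big)\le k-\sum_{i\in\Omega}\delta_i$ for every nonempty $\Omega\subseteq[\ell]$. Then there exist subspaces $V_i'\supseteq V_i$ of $\mathbb{F}_q^n$ with $\dim V_i'=k-\delta_i$, $i=1,\dots,\ell$, such that $\dim\big(\bigcap_{i\in\Omega}V_i'\big)\le k-\sum_{i\in\Omega}\delta_i$ for every nonempty $\Omega\subseteq[\ell]$. *)

theory Defs
  imports "HOL-Analysis.Analysis"
begin

end

theory Submission
  imports Defs
begin


abbreviation vsum :: "('a::field ^ 'n) set \<Rightarrow> ('a ^ 'n) set \<Rightarrow> ('a ^ 'n) set" where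
  "vsum A B \<equiv> {x + y |x y. x \<in> A \<and> y \<in> B}"

lemma extA:
  fixes A W :: "('a::field ^ 'n) set"
  assumes A: "vec.subspace A" and W: "vec.subspace W" and v: "v \<notin> vsum A W"
  shows "vec.span (insert v A) \<inter> W = A \<inter> W"
proof
  show "A \<inter> W \<subseteq> vec.span (insert v A) \<inter> W"
    using vec.span_superset by blast
next
  show "vec.span (insert v A) \<inter> W \<subseteq> A \<inter> W"
  proof
    fix x assume x: "x \<in> vec.span (insert v A) \<inter> W"
    then obtain c where c: "x - c *s v \<in> A"
      using vec.span_breakdown_eq A by (metis IntD1 vec.span_eq_iff)
    show "x \<in> A \<inter> W"
    proof (cases "c = 0")
      case True then show ?thesis using c x by simp
    next
      case False
      have "v = (- inverse c) *s (x - c *s v) + inverse c *s x"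
        using False by (simp add: algebra_simps vector_sadd_rdistrib vector_ssub_ldistrib)
      moreover have "(- inverse c) *s (x - c *s v) \<in> A" using c A vec.subspace_scale by blast
      moreover have "inverse c *s x \<in> W" using x W vec.subspace_scale by blast
      ultimately have "v \<in> vsum A W" by blast
      with v show ?thesis by blast
    qed
  qed
qed

lemma extB:
  fixes A W :: "('a::field ^ 'n) set"
  assumes A: "vec.subspace A" and W: "vec.subspace W"
  shows "vec.dim (vec.span (insert v A) \<inter> W) \<le> vec.dim (A \<inter> W) + 1"
proof -
  let ?A = "vec.span (insert v A)"
  have sA: "vec.subspace ?A" by simp
  have d1: "vec.dim (vsum ?A W) + vec.dim (?A \<inter> W) = vec.dim ?A + vec.dim W"
    using vec.dim_sums_Int[OF sA W] .
  have d2: "vec.dim (vsum A W) + vec.dim (A \<inter> W) = vec.dim A + vec.dim W"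
    using vec.dim_sums_Int[OF A W] .
  have "vsum A W \<subseteq> vsum ?A W" using vec.span_superset by blast
  then have d3: "vec.dim (vsum A W) \<le> vec.dim (vsum ?A W)" by (rule vec.dim_subset)
  have d4: "vec.dim ?A \<le> vec.dim A + 1"
    by (simp add: vec.dim_span vec.dim_insert)
  show ?thesis using d1 d2 d3 d4 by linarith
qed



lemma tightC:
  fixes V :: "nat \<Rightarrow> ('a::field ^ 'n) set"
  assumes sub: "\<forall>i\<in>{1..l}. vec.subspace (V i)"
  and con: "\<forall>\<Omega>. \<Omega> \<subseteq> {1..l} \<and> \<Omega> \<noteq> {} \<longrightarrow> int (vec.dim (\<Inter>i\<in>\<Omega>. V i)) \<le> int k - (\<Sum>i\<in>\<Omega>. int (\<delta> i))"
  and O1: "O1 \<subseteq> {1..l}" "int (vec.dim (\<Inter>i\<in>O1. V i)) = int k - (\<Sum>i\<in>O1. int (\<delta> i))"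
  and O2: "O2 \<subseteq> {1..l}" "int (vec.dim (\<Inter>i\<in>O2. V i)) = int k - (\<Sum>i\<in>O2. int (\<delta> i))"
  and ne: "O1 \<inter> O2 \<noteq> {}"
  shows "int (vec.dim (\<Inter>i\<in>O1\<inter>O2. V i)) = int k - (\<Sum>i\<in>O1\<inter>O2. int (\<delta> i))"
proof -
  let ?A = "\<Inter>i\<in>O1. V i" and ?B = "\<Inter>i\<in>O2. V i" and ?C = "\<Inter>i\<in>O1\<inter>O2. V i"
  have sA: "vec.subspace ?A" by (rule vec.subspace_Int) (use sub O1 in blast)
  have sB: "vec.subspace ?B" by (rule vec.subspace_Int) (use sub O2 in blast)
  have sC: "vec.subspace ?C" by (rule vec.subspace_Int) (use sub O1 in blast)
  have AC: "?A \<subseteq> ?C" and BC: "?B \<subseteq> ?C" by (intro INT_anti_mono; blast)+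
  have "vsum ?A ?B \<subseteq> ?C"
  proof
    fix z assume "z \<in> vsum ?A ?B"
    then obtain x y where xy: "z = x + y" "x \<in> ?A" "y \<in> ?B" by blast
    have "x \<in> ?C" using xy(2) AC by (rule subsetD[rotated])
    moreover have "y \<in> ?C" using xy(3) BC by (rule subsetD[rotated])
    ultimately show "z \<in> ?C" unfolding xy(1) by (rule vec.subspace_add[OF sC])
  qed
  then have d1: "vec.dim (vsum ?A ?B) \<le> vec.dim ?C" by (rule vec.dim_subset)
  have d2: "vec.dim (vsum ?A ?B) + vec.dim (?A \<inter> ?B) = vec.dim ?A + vec.dim ?B"
    using vec.dim_sums_Int[OF sA sB] .
  have AB: "?A \<inter> ?B = (\<Inter>i\<in>O1\<union>O2. V i)" by auto
  have fin1: "finite O1" and fin2: "finite O2" using O1 O2 finite_subset by auto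
  have ss: "(\<Sum>i\<in>O1\<union>O2. int (\<delta> i)) + (\<Sum>i\<in>O1\<inter>O2. int (\<delta> i)) = (\<Sum>i\<in>O1. int (\<delta> i)) + (\<Sum>i\<in>O2. int (\<delta> i))"
    using sum.union_inter[OF fin1 fin2] .
  have c1: "int (vec.dim (?A \<inter> ?B)) \<le> int k - (\<Sum>i\<in>O1\<union>O2. int (\<delta> i))"
    proof -
    have "O1 \<union> O2 \<subseteq> {1..l} \<and> O1 \<union> O2 \<noteq> {}" using O1 O2 ne by auto
    then show ?thesis unfolding AB using con by blast
  qed
  have c2: "int (vec.dim ?C) \<le> int k - (\<Sum>i\<in>O1\<inter>O2. int (\<delta> i))"
    proof -
    have "O1 \<inter> O2 \<subseteq> {1..l} \<and> O1 \<inter> O2 \<noteq> {}" using O1 ne by auto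
    then show ?thesis using con by blast
  qed
  show ?thesis using d1 d2 c1 c2 ss O1(2) O2(2) by linarith
qed



lemma stepL:
  fixes V :: "nat \<Rightarrow> ('a::field ^ 'n) set"
  assumes sub: "\<forall>i\<in>{1..l}. vec.subspace (V i)"
  and con: "\<forall>\<Omega>. \<Omega> \<subseteq> {1..l} \<and> \<Omega> \<noteq> {} \<longrightarrow> int (vec.dim (\<Inter>i\<in>\<Omega>. V i)) \<le> int k - (\<Sum>i\<in>\<Omega>. int (\<delta> i))"
  and kn: "k \<le> CARD('n)" and i: "i \<in> {1..l}" and lt: "int (vec.dim (V i)) < int k - int (\<delta> i)"
  shows "\<exists>v. v \<notin> V i \<and> (\<forall>\<Omega>. \<Omega> \<subseteq> {1..l} \<and> \<Omega> \<noteq> {} \<longrightarrow>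
     int (vec.dim (\<Inter>j\<in>\<Omega>. (V(i := vec.span (insert v (V i)))) j)) \<le> int k - (\<Sum>j\<in>\<Omega>. int (\<delta> j)))"
proof -
  define T where "T = {\<Omega>. \<Omega> \<subseteq> {1..l} \<and> i \<in> \<Omega> \<and> int (vec.dim (\<Inter>j\<in>\<Omega>. V j)) = int k - (\<Sum>j\<in>\<Omega>. int (\<delta> j))}"
  have Vi: "vec.subspace (V i)" using sub i by blast
  have Tne: "\<Omega> - {i} \<noteq> {}" if "\<Omega> \<in> T" for \<Omega>
  proof
    assume "\<Omega> - {i} = {}"
    with that have "\<Omega> = {i}" unfolding T_def by blast
    with that lt show False unfolding T_def by simp
  qed
  have split: "(\<Inter>j\<in>\<Omega>. W j) = W i \<inter> (\<Inter>j\<in>\<Omega>-{i}. W j)" if "i \<in> \<Omega>" for \<Omega> and W :: "nat \<Rightarrow> ('a ^ 'n) set"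
    using that by blast
  have ssplit: "(\<Sum>j\<in>\<Omega>. int (\<delta> j)) = int (\<delta> i) + (\<Sum>j\<in>\<Omega>-{i}. int (\<delta> j))" if "i \<in> \<Omega>" "\<Omega> \<subseteq> {1..l}" for \<Omega>
    using that by (meson finite_atLeastAtMost finite_subset sum.remove)
  have subW: "vec.subspace (\<Inter>j\<in>\<Omega>. V j)" if "\<Omega> \<subseteq> {1..l}" for \<Omega>
    by (rule vec.subspace_Int) (use sub that in blast)
  obtain S where S: "vec.subspace S" "V i \<subseteq> S" "vec.dim S < CARD('n)"
     "\<And>\<Omega>. \<Omega> \<in> T \<Longrightarrow> vsum (V i) (\<Inter>j\<in>\<Omega>-{i}. V j) \<subseteq> S"
  proof (cases "T = {}")
    case True
    show ?thesis
      by (rule that[of "V i"]) (use Vi lt kn True in auto)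
  next
    case False
    then obtain \<Omega>1 where "\<Omega>1 \<in> T" by blast
    then obtain \<Omega>0 where O0: "\<Omega>0 \<in> T" and min: "\<And>\<Omega>. \<Omega> \<in> T \<Longrightarrow> card \<Omega>0 \<le> card \<Omega>"
      using ex_has_least_nat[of "\<lambda>x. x \<in> T" \<Omega>1 card] by blast
    have O0s: "\<Omega>0 \<subseteq> {1..l}" "i \<in> \<Omega>0" "int (vec.dim (\<Inter>j\<in>\<Omega>0. V j)) = int k - (\<Sum>j\<in>\<Omega>0. int (\<delta> j))"
      using O0 unfolding T_def by auto
    define W0 where "W0 = (\<Inter>j\<in>\<Omega>0-{i}. V j)"
    have sW0: "vec.subspace W0" unfolding W0_def using subW O0s(1) by blast
    have dW0: "int (vec.dim W0) \<le> int k - (\<Sum>j\<in>\<Omega>0-{i}. int (\<delta> j))"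
      unfolding W0_def by (rule con[rule_format]) (use Tne[OF O0] O0s(1) in blast)
    have IW: "V i \<inter> W0 = (\<Inter>j\<in>\<Omega>0. V j)" unfolding W0_def using split[OF O0s(2)] by simp
    have dS: "vec.dim (vsum (V i) W0) + vec.dim (V i \<inter> W0) = vec.dim (V i) + vec.dim W0"
      using vec.dim_sums_Int[OF Vi sW0] .
    show ?thesis
    proof (rule that[of "vsum (V i) W0"])
      show "vec.subspace (vsum (V i) W0)" using vec.subspace_sums[OF Vi sW0] .
      show "V i \<subseteq> vsum (V i) W0"
      proof
        fix x assume "x \<in> V i"
        moreover have "0 \<in> W0" using vec.subspace_0[OF sW0] .
        ultimately show "x \<in> vsum (V i) W0" by force
      qed
      show "vec.dim (vsum (V i) W0) < CARD('n)"
        using dS[unfolded IW] dW0 O0s ssplit[OF O0s(2) O0s(1)] lt kn by linarith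
      fix \<Omega> assume OT: "\<Omega> \<in> T"
      have Os: "\<Omega> \<subseteq> {1..l}" "i \<in> \<Omega>" "int (vec.dim (\<Inter>j\<in>\<Omega>. V j)) = int k - (\<Sum>j\<in>\<Omega>. int (\<delta> j))"
        using OT unfolding T_def by auto
      have "int (vec.dim (\<Inter>j\<in>\<Omega>\<inter>\<Omega>0. V j)) = int k - (\<Sum>j\<in>\<Omega>\<inter>\<Omega>0. int (\<delta> j))"
        by (rule tightC[OF sub con Os(1) Os(3) O0s(1) O0s(3)]) (use Os O0s in blast)
      then have "\<Omega> \<inter> \<Omega>0 \<in> T" unfolding T_def using Os O0s by blast
      then have "card \<Omega>0 \<le> card (\<Omega> \<inter> \<Omega>0)" by (rule min)
      moreover have "finite \<Omega>0" using O0s(1) finite_subset by blast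
      ultimately have "\<Omega> \<inter> \<Omega>0 = \<Omega>0" by (meson card_seteq inf_le2)
      then have "\<Omega>0 - {i} \<subseteq> \<Omega> - {i}" by blast
      then have "(\<Inter>j\<in>\<Omega>-{i}. V j) \<subseteq> W0" unfolding W0_def by blast
      then show "vsum (V i) (\<Inter>j\<in>\<Omega>-{i}. V j) \<subseteq> vsum (V i) W0" by blast
    qed
  qed
  have "S \<noteq> UNIV"
  proof
    assume "S = UNIV"
    then have "vec.dim S = CARD('n)" by (simp add: card_cart_basis)
    with S(3) show False by simp
  qed
  then obtain v where v: "v \<notin> S" by blast
  have vVi: "v \<notin> V i" using v S(2) by blast
  show ?thesis
  proof (intro exI conjI allI impI)
    show "v \<notin> V i" by (rule vVi)
    fix \<Omega> assume O: "\<Omega> \<subseteq> {1..l} \<and> \<Omega> \<noteq> {}"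
    let ?V1 = "V(i := vec.span (insert v (V i)))"
    show "int (vec.dim (\<Inter>j\<in>\<Omega>. ?V1 j)) \<le> int k - (\<Sum>j\<in>\<Omega>. int (\<delta> j))"
    proof (cases "i \<in> \<Omega>")
      case False
      then have "(\<Inter>j\<in>\<Omega>. ?V1 j) = (\<Inter>j\<in>\<Omega>. V j)" by auto
      then show ?thesis using con[rule_format, OF O] by simp
    next
      case True
      have dA: "vec.dim (vec.span (insert v (V i))) = vec.dim (V i) + 1"
        using vVi Vi vec.span_eq_iff[of "V i"] by (metis vec.dim_span vec.dim_insert)
      show ?thesis
      proof (cases "\<Omega> - {i} = {}")
        case True2: True
        then have "\<Omega> = {i}" using True by blast
        then show ?thesis using dA lt by simp
      next
        case False
        define W where "W = (\<Inter>j\<in>\<Omega>-{i}. V j)"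
        have sW: "vec.subspace W" unfolding W_def using subW O by blast
        have e1: "(\<Inter>j\<in>\<Omega>. ?V1 j) = vec.span (insert v (V i)) \<inter> W"
          unfolding W_def using split[OF True, of ?V1] by simp
        have e0: "(\<Inter>j\<in>\<Omega>. V j) = V i \<inter> W"
          unfolding W_def using split[OF True, of V] by simp
        show ?thesis
        proof (cases "\<Omega> \<in> T")
          case True3: True
          have "v \<notin> vsum (V i) W" using S(4)[OF True3] v unfolding W_def by blast
          then have eq: "vec.span (insert v (V i)) \<inter> W = V i \<inter> W" by (rule extA[OF Vi sW])
          have "int (vec.dim (\<Inter>j\<in>\<Omega>. V j)) \<le> int k - (\<Sum>j\<in>\<Omega>. int (\<delta> j))" using con[rule_format, OF O] .
          then show ?thesis unfolding e1 eq e0 .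
        next
          case False3: False
          then have "int (vec.dim (V i \<inter> W)) \<noteq> int k - (\<Sum>j\<in>\<Omega>. int (\<delta> j))"
            unfolding T_def using O True e0 by auto
          moreover have "int (vec.dim (V i \<inter> W)) \<le> int k - (\<Sum>j\<in>\<Omega>. int (\<delta> j))"
            using con[rule_format, OF O] unfolding e0 .
          moreover have "vec.dim (vec.span (insert v (V i)) \<inter> W) \<le> vec.dim (V i \<inter> W) + 1"
            by (rule extB[OF Vi sW])
          ultimately show ?thesis unfolding e1 by linarith
        qed
      qed
    qed
  qed
qed



lemma mainL:
  fixes \<delta> :: "nat \<Rightarrow> nat" and k l :: nat
  assumes kn: "k \<le> CARD('n)"
  shows "\<forall>V :: nat \<Rightarrow> ('a::field ^ 'n) set. (\<forall>i\<in>{1..l}. vec.subspace (V i))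
    \<and> (\<forall>\<Omega>. \<Omega> \<subseteq> {1..l} \<and> \<Omega> \<noteq> {} \<longrightarrow> int (vec.dim (\<Inter>i\<in>\<Omega>. V i)) \<le> int k - (\<Sum>i\<in>\<Omega>. int (\<delta> i)))
    \<and> (\<Sum>i\<in>{1..l}. k - \<delta> i - vec.dim (V i)) = m \<longrightarrow>
    (\<exists>V' :: nat \<Rightarrow> ('a ^ 'n) set.
           (\<forall>i\<in>{1..l}. vec.subspace (V' i) \<and> V i \<subseteq> V' i
               \<and> int (vec.dim (V' i)) = int k - int (\<delta> i))
         \<and> (\<forall>\<Omega>. \<Omega> \<subseteq> {1..l} \<and> \<Omega> \<noteq> {} \<longrightarrow>
               int (vec.dim (\<Inter>i\<in>\<Omega>. V' i)) \<le> int k - (\<Sum>i\<in>\<Omega>. int (\<delta> i))))"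
proof (induction m rule: less_induct)
  case (less m)
  show ?case
  proof (intro allI impI)
    fix V :: "nat \<Rightarrow> ('a ^ 'n) set"
    assume H: "(\<forall>i\<in>{1..l}. vec.subspace (V i))
    \<and> (\<forall>\<Omega>. \<Omega> \<subseteq> {1..l} \<and> \<Omega> \<noteq> {} \<longrightarrow> int (vec.dim (\<Inter>i\<in>\<Omega>. V i)) \<le> int k - (\<Sum>i\<in>\<Omega>. int (\<delta> i)))
    \<and> (\<Sum>i\<in>{1..l}. k - \<delta> i - vec.dim (V i)) = m"
    then have sub: "\<forall>i\<in>{1..l}. vec.subspace (V i)"
      and con: "\<forall>\<Omega>. \<Omega> \<subseteq> {1..l} \<and> \<Omega> \<noteq> {} \<longrightarrow> int (vec.dim (\<Inter>i\<in>\<Omega>. V i)) \<le> int k - (\<Sum>i\<in>\<Omega>. int (\<delta> i))"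
      and m: "(\<Sum>i\<in>{1..l}. k - \<delta> i - vec.dim (V i)) = m" by auto
    have single: "int (vec.dim (V i)) \<le> int k - int (\<delta> i)" if "i \<in> {1..l}" for i
    proof -
      have "{i} \<subseteq> {1..l} \<and> {i} \<noteq> {}" using that by auto
      then show ?thesis using con[rule_format, of "{i}"] by simp
    qed
    show "\<exists>V'. (\<forall>i\<in>{1..l}. vec.subspace (V' i) \<and> V i \<subseteq> V' i
               \<and> int (vec.dim (V' i)) = int k - int (\<delta> i))
         \<and> (\<forall>\<Omega>. \<Omega> \<subseteq> {1..l} \<and> \<Omega> \<noteq> {} \<longrightarrow>
               int (vec.dim (\<Inter>i\<in>\<Omega>. V' i)) \<le> int k - (\<Sum>i\<in>\<Omega>. int (\<delta> i)))"
    proof (cases "\<forall>i\<in>{1..l}. int (vec.dim (V i)) = int k - int (\<delta> i)")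
      case True
      show ?thesis
      proof (rule exI[of _ V], rule conjI)
        show "\<forall>i\<in>{1..l}. vec.subspace (V i) \<and> V i \<subseteq> V i \<and> int (vec.dim (V i)) = int k - int (\<delta> i)"
          using True sub by simp
      qed (rule con)
    next
      case False
      then obtain i where i: "i \<in> {1..l}" and lt: "int (vec.dim (V i)) < int k - int (\<delta> i)"
        using single by force
      obtain v where v: "v \<notin> V i" and con1: "\<forall>\<Omega>. \<Omega> \<subseteq> {1..l} \<and> \<Omega> \<noteq> {} \<longrightarrow>
     int (vec.dim (\<Inter>j\<in>\<Omega>. (V(i := vec.span (insert v (V i)))) j)) \<le> int k - (\<Sum>j\<in>\<Omega>. int (\<delta> j))"
        using stepL[OF sub con kn i lt] by blast
      define V1 where "V1 = V(i := vec.span (insert v (V i)))"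
      have Vi: "vec.subspace (V i)" using sub i by blast
      have dA: "vec.dim (V1 i) = vec.dim (V i) + 1"
        unfolding V1_def using v Vi vec.span_eq_iff[of "V i"] by (metis fun_upd_same vec.dim_span vec.dim_insert)
      have sub1: "\<forall>j\<in>{1..l}. vec.subspace (V1 j)" using sub unfolding V1_def by simp
      have le: "\<forall>j\<in>{1..l}. k - \<delta> j - vec.dim (V1 j) \<le> k - \<delta> j - vec.dim (V j)"
      proof
        fix j assume "j \<in> {1..l}"
        show "k - \<delta> j - vec.dim (V1 j) \<le> k - \<delta> j - vec.dim (V j)"
        proof (cases "j = i")
          case True then show ?thesis using dA by simp
        next
          case False then show ?thesis unfolding V1_def by simp
        qed
      qed
      have lt1: "k - \<delta> i - vec.dim (V1 i) < k - \<delta> i - vec.dim (V i)"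
        using dA lt by linarith
      have "(\<Sum>j\<in>{1..l}. k - \<delta> j - vec.dim (V1 j)) < m"
        unfolding m[symmetric] by (rule sum_strict_mono_ex1) (use le lt1 i in auto)
      from less.IH[OF this, rule_format, of V1] sub1 con1
      obtain V' where V': "\<forall>j\<in>{1..l}. vec.subspace (V' j) \<and> V1 j \<subseteq> V' j
               \<and> int (vec.dim (V' j)) = int k - int (\<delta> j)"
         "\<forall>\<Omega>. \<Omega> \<subseteq> {1..l} \<and> \<Omega> \<noteq> {} \<longrightarrow>
               int (vec.dim (\<Inter>i\<in>\<Omega>. V' i)) \<le> int k - (\<Sum>i\<in>\<Omega>. int (\<delta> i))"
        unfolding V1_def by auto
      have VV1: "\<And>j. V j \<subseteq> V1 j" unfolding V1_def using vec.span_superset[of "insert v (V i)"] by auto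
      show ?thesis
      proof (rule exI[of _ V'], rule conjI)
        show "\<forall>j\<in>{1..l}. vec.subspace (V' j) \<and> V j \<subseteq> V' j \<and> int (vec.dim (V' j)) = int k - int (\<delta> j)"
          using V'(1) VV1 by blast
      qed (rule V'(2))
    qed
  qed
qed

theorem mainTheorem12:
  fixes V :: "nat \<Rightarrow> ('a::{finite,field} ^ 'n) set"
    and \<delta> :: "nat \<Rightarrow> nat"
    and k l :: nat
  assumes "k \<le> CARD('n)"
    and "\<forall>i\<in>{1..l}. vec.subspace (V i) \<and> vec.dim (V i) \<le> k"
    and "\<forall>\<Omega>. \<Omega> \<subseteq> {1..l} \<and> \<Omega> \<noteq> {} \<longrightarrow>
           int (vec.dim (\<Inter>i\<in>\<Omega>. V i)) \<le> int k - (\<Sum>i\<in>\<Omega>. int (\<delta> i))"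
  shows "\<exists>V' :: nat \<Rightarrow> ('a ^ 'n) set.
           (\<forall>i\<in>{1..l}. vec.subspace (V' i) \<and> V i \<subseteq> V' i
               \<and> int (vec.dim (V' i)) = int k - int (\<delta> i))
         \<and> (\<forall>\<Omega>. \<Omega> \<subseteq> {1..l} \<and> \<Omega> \<noteq> {} \<longrightarrow>
               int (vec.dim (\<Inter>i\<in>\<Omega>. V' i)) \<le> int k - (\<Sum>i\<in>\<Omega>. int (\<delta> i)))"
  by (rule mainL[OF assms(1), where m="\<Sum>i\<in>{1..l}. k - \<delta> i - vec.dim (V i)", rule_format]) (use assms(2,3) in auto)

end
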